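(* For every positive integer $n$: (a) $\displaystyle nN^p(n)=\sum_{k=1}^{n-1}N^p(k)\sigma(n-k)+\sum_{t=1}^{n}t\,\tau(t)\,p(n-t)$; (b) $\displaystyle nN^q(n)=\sum_{k=1}^{n-1}N^q(k)\sigma^s(n-k)+\sum_{t=1}^{n}t\,\tau^s(t)\,q(n-t)$; (c) $\displaystyle nN^p_{bin}(n)=\sum_{k=1}^{n-1}N^p_{bin}(k)\big(2^{\vartheta_2(n-k)+1}-1\big)+\sum_{t=1}^{n}t\big(\vartheta_2(t)+1\big)b(n-t)$.
   Context: $N^p(n)$ (resp. $N^q(n)$) is the total number of parts, summed over all partitions (resp. partitions into distinct parts) of $n$; $p(m)$, $q(m)$ are the numbers of partitions and of partitions into distinct parts of $m$, with $p(0)=q(0)=1$. $\tau(m)$ is the number of positive divisors of $m$, $\sigma(m)$ their sum, $\tau^s(m)=\sum_{d\mid m}(-1)^{m/d-1}$, $\sigma^s(m)=\sum_{d\mid m}(-1)^{m/d-1}d$. A binary partition is a partition whose parts are powers of $2$ (including $1$); $b(m)$ is the number of binary partitions of $m$ with $b(0)=1$, and $N^p_{bin}(m)$ is the total number of parts over all binary partitions of $m$. $\vartheta_2$ is the $2$-adic valuation. *)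

theory Defs
  imports Main "HOL-Library.Multiset" "HOL-Computational_Algebra.Primes"
begin

definition partitions :: "nat \<Rightarrow> nat multiset set" where
  "partitions n = {M. (\<forall>x\<in>#M. 0 < x) \<and> sum_mset M = n}"

definition dist_partitions :: "nat \<Rightarrow> nat multiset set" where
  "dist_partitions n = {M \<in> partitions n. \<forall>x. count M x \<le> 1}"

definition bin_partitions :: "nat \<Rightarrow> nat multiset set" where
  "bin_partitions n = {M \<in> partitions n. \<forall>x\<in>#M. \<exists>k. x = 2 ^ k}"

definition p :: "nat \<Rightarrow> nat" where "p n = card (partitions n)"
definition q :: "nat \<Rightarrow> nat" where "q n = card (dist_partitions n)"
definition b :: "nat \<Rightarrow> nat" where "b n = card (bin_partitions n)"

definition Np :: "nat \<Rightarrow> nat" where "Np n = (\<Sum>M\<in>partitions n. size M)"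
definition Nq :: "nat \<Rightarrow> nat" where "Nq n = (\<Sum>M\<in>dist_partitions n. size M)"
definition Np_bin :: "nat \<Rightarrow> nat" where "Np_bin n = (\<Sum>M\<in>bin_partitions n. size M)"

definition divisors :: "nat \<Rightarrow> nat set" where
  "divisors m = {d \<in> {1..m}. d dvd m}"

definition tau :: "nat \<Rightarrow> int" where "tau m = int (card (divisors m))"
definition sigma :: "nat \<Rightarrow> int" where "sigma m = (\<Sum>d\<in>divisors m. int d)"
definition tau_s :: "nat \<Rightarrow> int" where
  "tau_s m = (\<Sum>d\<in>divisors m. (-1) ^ (m div d - 1))"
definition sigma_s :: "nat \<Rightarrow> int" where
  "sigma_s m = (\<Sum>d\<in>divisors m. (-1) ^ (m div d - 1) * int d)"

definition v2 :: "nat \<Rightarrow> nat" where "v2 m = multiplicity (2::nat) m"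

end

theory Submission
  imports Defs
begin

lemma group_sum:
  fixes f :: "nat \<Rightarrow> nat \<Rightarrow> int"
  shows "(\<Sum>j\<in>{1..n}. \<Sum>m\<in>{1..n div j}. f j m) = (\<Sum>k\<in>{1..n}. \<Sum>j\<in>divisors k. f j (k div j))"
proof -
  have "(\<Sum>j\<in>{1..n}. \<Sum>m\<in>{1..n div j}. f j m) = (\<Sum>(j,m)\<in>Sigma {1..n} (\<lambda>j. {1..n div j}). f j m)"
    by (rule sum.Sigma) auto
  also have "\<dots> = (\<Sum>(k,j)\<in>Sigma {1..n} divisors. f j (k div j))"
  proof (rule sum.reindex_bij_witness[of _ "\<lambda>(k,j). (j, k div j)" "\<lambda>(j,m). (j*m, j)"])
    fix a assume "a \<in> Sigma {1..n} divisors" then show "(case case a of (k, j) \<Rightarrow> (j, k div j) of (j, m) \<Rightarrow> (j * m, j)) = a"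
      by (auto simp: divisors_def)
  next
    fix a assume a: "a \<in> Sigma {1..n} divisors"
    obtain k j where a_eq: "a = (k,j)" and k: "1 \<le> k" "k \<le> n" and j: "1 \<le> j" "j \<le> k" "j dvd k"
      using a by (auto simp: divisors_def)
    have "k div j \<le> n div j" using k by (simp add: div_le_mono)
    moreover have "1 \<le> k div j" using j by (simp add: Suc_le_eq div_greater_zero_iff)
    ultimately show "(case a of (k, j) \<Rightarrow> (j, k div j)) \<in> Sigma {1..n} (\<lambda>j. {1..n div j})"
      using a_eq j k by simp
  next
    fix a assume "a \<in> Sigma {1..n} (\<lambda>j. {1..n div j})" then show "(case case a of (j, m) \<Rightarrow> (j * m, j) of (k, j) \<Rightarrow> (j, k div j)) = a"
      by auto
  next
    fix a assume a: "a \<in> Sigma {1..n} (\<lambda>j. {1..n div j})"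
    obtain j m where a_eq: "a = (j,m)" and j: "1 \<le> j" "j \<le> n" and m: "1 \<le> m" "m \<le> n div j"
      using a by auto
    have "j*m \<le> j*(n div j)" using m by simp
    then have jm: "j*m \<le> n" using times_div_less_eq_dividend[of j n] by linarith
    have "1 \<le> j*m" "j \<le> j*m" using j m by simp_all
    then show "(case a of (j, m) \<Rightarrow> (j * m, j)) \<in> Sigma {1..n} divisors"
      using jm a_eq by (simp add: divisors_def)
  next
    fix a assume "a \<in> Sigma {1..n} (\<lambda>j. {1..n div j})" then show "(case case a of (j, m) \<Rightarrow> (j * m, j) of (k, j) \<Rightarrow> f j (k div j)) = (case a of (j, m) \<Rightarrow> f j m)"
      by auto
  qed
  also have "\<dots> = (\<Sum>k\<in>{1..n}. \<Sum>j\<in>divisors k. f j (k div j))"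
    by (rule sum.Sigma[symmetric]) (auto simp: divisors_def)
  finally show ?thesis .
qed

definition PS :: "nat set \<Rightarrow> nat \<Rightarrow> nat multiset set" where
  "PS S n = {M. set_mset M \<subseteq> S \<and> sum_mset M = n}"

lemma sum_mset_count:
  fixes M :: "nat multiset"
  assumes "finite A" "set_mset M \<subseteq> A"
  shows "int (sum_mset M) = (\<Sum>j\<in>A. int j * int (count M j))"
  using assms(2)
proof (induction M)
  case empty then show ?case by simp
next
  case (add x M)
  have xA: "x \<in> A" using add.prems by simp
  have "(\<Sum>j\<in>A. int j * int (count (add_mset x M) j)) = (\<Sum>j\<in>A. int j * int (count M j) + (if j = x then int x else 0))"
    by (rule sum.cong) (auto simp: algebra_simps)
  also have "\<dots> = (\<Sum>j\<in>A. int j * int (count M j)) + int x"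
    using assms(1) xA by (simp add: sum.distrib)
  finally show ?case using add by simp
qed

lemma size_le_sum_mset:
  fixes M :: "nat multiset"
  assumes "0 \<notin> set_mset M"
  shows "size M \<le> sum_mset M"
  using assms
proof (induction M)
  case empty then show ?case by simp
next
  case (add x M)
  then show ?case by (cases x) auto
qed

lemma mem_le_sum_mset:
  fixes M :: "nat multiset"
  assumes "x \<in># M" shows "x \<le> sum_mset M"
  proof -
  from assms obtain M' where "M = add_mset x M'" by (blast dest: multi_member_split)
  then show ?thesis by simp
qed

lemma count_mult_le:
  fixes M :: "nat multiset"
  shows "j * count M j \<le> sum_mset M"
proof -
  define R where "R = replicate_mset (count M j) j"
  have "R \<subseteq># M" unfolding R_def by (simp add: count_le_replicate_mset_subset_eq[symmetric])
  then obtain N where eq: "M = R + N" by (auto simp: mset_subset_eq_exists_conv)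
  have "sum_mset M = sum_mset R + sum_mset N" using eq by simp
  then have "sum_mset R \<le> sum_mset M" by simp
  then show ?thesis by (simp add: R_def mult.commute)
qed

lemma PS_subset:
  assumes "0 \<notin> S" "M \<in> PS S n" shows "set_mset M \<subseteq> {1..n}"
proof
  fix x assume x: "x \<in># M"
  then have "x \<in> S" "x \<le> n" using assms(2) mem_le_sum_mset by (auto simp: PS_def)
  with assms(1) show "x \<in> {1..n}" by (cases x) auto
qed

lemma PS_finite:
  assumes "0 \<notin> S"
  shows "finite (PS S n)"
proof -
  have "PS S n \<subseteq> (\<Union>s\<in>{..n}. multisets_of_size {1..n} s)"
  proof
    fix M assume M: "M \<in> PS S n"
    then have "0 \<notin> set_mset M" using assms by (auto simp: PS_def)
    then have "size M \<le> n" using size_le_sum_mset M by (auto simp: PS_def)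
    moreover have "set_mset M \<subseteq> {1..n}"
      using M assms by (rule PS_subset[rotated])
    ultimately show "M \<in> (\<Union>s\<in>{..n}. multisets_of_size {1..n} s)"
      by (auto simp: multisets_of_size_def)
  qed
  then show ?thesis by (rule finite_subset) auto
qed


definition NS :: "nat set \<Rightarrow> nat \<Rightarrow> int" where "NS S r = (\<Sum>M\<in>PS S r. int (size M))"
definition cS :: "nat set \<Rightarrow> nat \<Rightarrow> int" where "cS S r = int (card (PS S r))"

lemma bij_step:
  assumes S0: "0 \<notin> S" and jS: "j \<in> S" and m1: "1 \<le> m" and mn: "m \<le> n div j"
  shows "(\<Sum>M\<in>PS S n. if m \<le> count M j then int (size M) else 0) = NS S (n - j*m) + int m * cS S (n-j*m)"
proof -
  have "j * m \<le> j * (n div j)" using mn by simp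
  then have jm: "j * m \<le> n" using times_div_less_eq_dividend[of j n] by linarith
  have fin: "finite (PS S n)" using PS_finite[OF S0] .
  have "(\<Sum>M\<in>PS S n. if m \<le> count M j then int (size M) else 0) = (\<Sum>M\<in>{M\<in>PS S n. m \<le> count M j}. int (size M))"
    using fin by (simp add: sum.inter_filter)
  also have "\<dots> = (\<Sum>M\<in>PS S (n - j*m). int (size (M + replicate_mset m j)))"
  proof (rule sum.reindex_bij_witness[of _ "\<lambda>M. M + replicate_mset m j" "\<lambda>M. M - replicate_mset m j"])
    fix M assume "M \<in> PS S (n - j*m)"
    then show "M + replicate_mset m j - replicate_mset m j = M" by simp
  next
    fix M assume M: "M \<in> PS S (n - j*m)"
    then show "M + replicate_mset m j \<in> {M \<in> PS S n. m \<le> count M j}"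
      using jS m1 jm by (auto simp: PS_def)
  next
    fix M assume M: "M \<in> {M \<in> PS S n. m \<le> count M j}"
    then have sub: "replicate_mset m j \<subseteq># M" by (simp add: count_le_replicate_mset_subset_eq[symmetric])
    then show "M - replicate_mset m j + replicate_mset m j = M" by simp
  next
    fix M assume M: "M \<in> {M \<in> PS S n. m \<le> count M j}"
    then have sub: "replicate_mset m j \<subseteq># M" by (simp add: count_le_replicate_mset_subset_eq[symmetric])
    then have "M = (M - replicate_mset m j) + replicate_mset m j" by simp
    then have "sum_mset M = sum_mset (M - replicate_mset m j) + sum_mset (replicate_mset m j)"
      by (simp only: sum_mset.union[symmetric])
    then have "sum_mset (M - replicate_mset m j) + sum_mset (replicate_mset m j) = sum_mset M" by simp
    then have "sum_mset (M - replicate_mset m j) = n - j * m" using M by (auto simp: PS_def)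
    moreover have "set_mset (M - replicate_mset m j) \<subseteq> S" using M
      by (auto simp: PS_def dest!: in_diffD)
    ultimately show "M - replicate_mset m j \<in> PS S (n - j * m)" by (simp add: PS_def)
  next
    fix M assume M: "M \<in> {M \<in> PS S n. m \<le> count M j}"
    then show "int (size (M - replicate_mset m j + replicate_mset m j)) = int (size M)"
      by (simp add: count_le_replicate_mset_subset_eq[symmetric])
  qed
  also have "\<dots> = (\<Sum>M\<in>PS S (n - j*m). int (size M) + int m)" by simp
  also have "\<dots> = NS S (n - j*m) + int m * cS S (n-j*m)"
    by (simp add: sum.distrib NS_def cS_def)
  finally show ?thesis .
qed

lemma count_as_sum:
  assumes "c \<le> N"
  shows "int c = (\<Sum>m\<in>{1..N}. if m \<le> c then 1 else 0)"
proof -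
  have "(\<Sum>m\<in>{1..N}. if m \<le> c then 1 else (0::int)) = (\<Sum>m\<in>{m\<in>{1..N}. m \<le> c}. 1)"
    by (rule sum.inter_filter[symmetric]) simp
  also have "{m\<in>{1..N}. m \<le> c} = {1..c}" using assms by auto
  finally show ?thesis by simp
qed

lemma main_A:
  assumes S0: "0 \<notin> S"
  shows "int n * NS S n = (\<Sum>k\<in>{1..n}. (\<Sum>j\<in>{d\<in>S. d dvd k}. int j) * NS S (n-k)
            + int k * int (card {d\<in>S. d dvd k}) * cS S (n-k))"
proof -
  have fin: "finite (PS S n)" using PS_finite[OF S0] .
  have "int n * NS S n = (\<Sum>M\<in>PS S n. int (size M) * int (sum_mset M))"
    unfolding NS_def sum_distrib_left by (intro sum.cong refl) (simp add: PS_def)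
  also have "\<dots> = (\<Sum>M\<in>PS S n. \<Sum>j\<in>{1..n}. \<Sum>m\<in>{1..n div j}. int j * (if m \<le> count M j then int (size M) else 0))"
  proof (rule sum.cong[OF refl])
    fix M assume M: "M \<in> PS S n"
    have "int (size M) * int (sum_mset M) = int (size M) * (\<Sum>j\<in>{1..n}. int j * int (count M j))"
      using sum_mset_count[OF _ PS_subset[OF S0 M]] by simp
    also have "\<dots> = (\<Sum>j\<in>{1..n}. \<Sum>m\<in>{1..n div j}. int j * (if m \<le> count M j then int (size M) else 0))"
      unfolding sum_distrib_left
    proof (rule sum.cong[OF refl])
      fix j :: nat assume j: "j \<in> {1..n}"
      have "j * count M j \<le> n" using count_mult_le[of j M] M by (simp add: PS_def)
      then have "count M j \<le> n div j" using j
        by (simp add: less_eq_div_iff_mult_less_eq mult.commute)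
      then have "int (count M j) = (\<Sum>m\<in>{1..n div j}. if m \<le> count M j then 1 else 0)"
        by (rule count_as_sum)
      then show "int (size M) * (int j * int (count M j)) = (\<Sum>m\<in>{1..n div j}. int j * (if m \<le> count M j then int (size M) else 0))"
        by (auto simp: sum_distrib_left mult.commute intro!: sum.cong)
    qed
    finally show "int (size M) * int (sum_mset M) = (\<Sum>j\<in>{1..n}. \<Sum>m\<in>{1..n div j}. int j * (if m \<le> count M j then int (size M) else 0))" .
  qed
  also have "\<dots> = (\<Sum>j\<in>{1..n}. \<Sum>m\<in>{1..n div j}. \<Sum>M\<in>PS S n. int j * (if m \<le> count M j then int (size M) else 0))"
    by (subst sum.swap) (simp add: sum.swap[of _ "PS S n"])
  also have "\<dots> = (\<Sum>j\<in>{1..n}. \<Sum>m\<in>{1..n div j}. if j \<in> S then int j * (NS S (n - j*m) + int m * cS S (n-j*m)) else 0)"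
  proof (intro sum.cong refl)
    fix j m assume j: "j \<in> {1..n}" and m: "m \<in> {1..n div j}"
    show "(\<Sum>M\<in>PS S n. int j * (if m \<le> count M j then int (size M) else 0)) = (if j \<in> S then int j * (NS S (n - j*m) + int m * cS S (n-j*m)) else 0)"
    proof (cases "j \<in> S")
      case True
      then show ?thesis using bij_step[OF S0 True, of m n] m by (simp add: sum_distrib_left[symmetric])
    next
      case False
      have "\<And>M. M \<in> PS S n \<Longrightarrow> count M j = 0" using False by (auto simp: PS_def count_eq_zero_iff)
      then show ?thesis using False m by simp
    qed
  qed
  also have "\<dots> = (\<Sum>k\<in>{1..n}. \<Sum>j\<in>divisors k. if j \<in> S then int j * (NS S (n - j*(k div j)) + int (k div j) * cS S (n-j*(k div j))) else 0)"
    by (rule group_sum)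
  also have "\<dots> = (\<Sum>k\<in>{1..n}. (\<Sum>j\<in>{d\<in>S. d dvd k}. int j) * NS S (n-k)
            + int k * int (card {d\<in>S. d dvd k}) * cS S (n-k))"
  proof (rule sum.cong[OF refl])
    fix k assume k: "k \<in> {1..n}"
    have fd: "finite (divisors k)" by (simp add: divisors_def)
    have eq: "{d\<in>S. d dvd k} = {j\<in>divisors k. j \<in> S}" using k S0
      by (auto simp: divisors_def dvd_imp_le)
    have "(\<Sum>j\<in>divisors k. if j \<in> S then int j * (NS S (n - j*(k div j)) + int (k div j) * cS S (n-j*(k div j))) else 0)
        = (\<Sum>j\<in>divisors k. if j \<in> S then int j * NS S (n-k) + int k * cS S (n-k) else 0)"
    proof (rule sum.cong[OF refl])
      fix j assume "j \<in> divisors k"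
      then have "j * (k div j) = k" by (auto simp: divisors_def)
      then have "int j * int (k div j) = int k" by (simp only: of_nat_mult[symmetric])
      then show "(if j \<in> S then int j * (NS S (n - j*(k div j)) + int (k div j) * cS S (n-j*(k div j))) else 0)
          = (if j \<in> S then int j * NS S (n-k) + int k * cS S (n-k) else 0)"
        using \<open>j * (k div j) = k\<close> by (simp add: algebra_simps)
    qed
    also have "\<dots> = (\<Sum>j\<in>{j\<in>divisors k. j \<in> S}. int j * NS S (n-k) + int k * cS S (n-k))"
      by (rule sum.inter_filter[symmetric]) (rule fd)
    also have "\<dots> = (\<Sum>j\<in>{d\<in>S. d dvd k}. int j) * NS S (n-k) + int k * int (card {d\<in>S. d dvd k}) * cS S (n-k)"
      unfolding eq by (simp add: sum.distrib sum_distrib_right)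
    finally show "(\<Sum>j\<in>divisors k. if j \<in> S then int j * (NS S (n - j*(k div j)) + int (k div j) * cS S (n-j*(k div j))) else 0)
        = (\<Sum>j\<in>{d\<in>S. d dvd k}. int j) * NS S (n-k) + int k * int (card {d\<in>S. d dvd k}) * cS S (n-k)" .
  qed
  finally show ?thesis .
qed

lemma partitions_PS: "partitions r = PS {0<..} r"
  by (auto simp: partitions_def PS_def)

lemma dist_fin: "finite (dist_partitions r)"
proof -
  have "dist_partitions r \<subseteq> PS {0<..} r" by (auto simp: dist_partitions_def partitions_PS)
  then show ?thesis using PS_finite[of "{0<..}" r] by (auto intro: finite_subset)
qed

definition G :: "nat \<Rightarrow> nat \<Rightarrow> int" where
  "G j r = (\<Sum>M\<in>{M\<in>dist_partitions r. j \<in># M}. int (size M))"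
definition H :: "nat \<Rightarrow> nat \<Rightarrow> int" where
  "H j r = int (card {M\<in>dist_partitions r. j \<in># M})"
definition NQ :: "nat \<Rightarrow> int" where "NQ r = (\<Sum>M\<in>dist_partitions r. int (size M))"

lemma NQ_eq: "NQ r = int (Nq r)" by (simp add: NQ_def Nq_def)

lemma bij_add:
  assumes "0 < j"
  shows "bij_betw (add_mset j) {M\<in>dist_partitions r. j \<notin># M} {M\<in>dist_partitions (r+j). j \<in># M}"
proof (rule bij_betw_byWitness[where f' = "\<lambda>M. M - {#j#}"])
  show "\<forall>a\<in>{M \<in> dist_partitions r. j \<notin># M}. (\<lambda>M. M - {#j#}) (add_mset j a) = a"
    by auto
  show "\<forall>a'\<in>{M \<in> dist_partitions (r + j). j \<in># M}. add_mset j ((\<lambda>M. M - {#j#}) a') = a'" by simp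
  show "add_mset j ` {M \<in> dist_partitions r. j \<notin># M} \<subseteq> {M \<in> dist_partitions (r + j). j \<in># M}"
    using assms by (auto simp: dist_partitions_def partitions_def count_eq_zero_iff)
  show "(\<lambda>M. M - {#j#}) ` {M \<in> dist_partitions (r + j). j \<in># M} \<subseteq> {M \<in> dist_partitions r. j \<notin># M}"
  proof
    fix M' assume "M' \<in> (\<lambda>M. M - {#j#}) ` {M \<in> dist_partitions (r + j). j \<in># M}"
    then obtain M where M: "M \<in> dist_partitions (r + j)" "j \<in># M" and M': "M' = M - {#j#}" by auto
    have c: "count M j \<le> 1" "\<And>x. count M x \<le> 1" using M by (auto simp: dist_partitions_def)
    have "M = add_mset j M'" using M' M(2) by simp
    then have "sum_mset M = sum_mset M' + j" by (simp only: sum_mset.insert) simp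
    then have "sum_mset M' = r" using M by (auto simp: dist_partitions_def partitions_def)
    moreover have "j \<notin># M'"
    proof -
      have "count M' j = count M j - 1" using M' by simp
      then have "count M' j = 0" using c(1) by simp
      then show ?thesis by (simp add: not_in_iff)
    qed
    moreover have "\<forall>x. count M' x \<le> 1"
    proof
      fix x
      have "count M' x \<le> count M x" using M' by simp
      then show "count M' x \<le> 1" using c(2)[of x] by linarith
    qed
    moreover have "\<forall>x\<in>#M'. 0 < x" using M M' by (auto simp: dist_partitions_def partitions_def dest: in_diffD)
    ultimately show "M' \<in> {M \<in> dist_partitions r. j \<notin># M}"
      by (auto simp: dist_partitions_def partitions_def)
  qed
qed

lemma GH_rec:
  assumes "0 < j"
  shows "G j (r+j) = NQ r - G j r + H j (r+j)" and "H j (r+j) = int (q r) - H j r"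
proof -
  let ?A = "{M\<in>dist_partitions r. j \<notin># M}" and ?B = "{M\<in>dist_partitions r. j \<in># M}"
  have bij: "bij_betw (add_mset j) ?A {M\<in>dist_partitions (r+j). j \<in># M}" by (rule bij_add[OF assms])
  have finA: "finite ?A" and finB: "finite ?B" using dist_fin by auto
  have un: "dist_partitions r = ?A \<union> ?B" "?A \<inter> ?B = {}" by auto
  have Hr: "H j (r+j) = int (card ?A)" unfolding H_def using bij_betw_same_card[OF bij] by simp
  have "G j (r+j) = (\<Sum>M\<in>?A. int (size (add_mset j M)))"
    unfolding G_def using sum.reindex_bij_betw[OF bij, of "\<lambda>M. int (size M)"] by simp
  also have "\<dots> = (\<Sum>M\<in>?A. int (size M)) + int (card ?A)" by (simp add: sum.distrib)
  finally have G1: "G j (r+j) = (\<Sum>M\<in>?A. int (size M)) + int (card ?A)" .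
  have "NQ r = (\<Sum>M\<in>?A. int (size M)) + G j r"
    unfolding NQ_def G_def by (subst un(1), rule sum.union_disjoint) (use finA finB in auto)
  then show "G j (r+j) = NQ r - G j r + H j (r+j)" using G1 Hr by simp
  have "int (q r) = int (card ?A) + H j r"
    unfolding q_def H_def by (subst un(1), subst card_Un_disjoint) (use finA finB in auto)
  then show "H j (r+j) = int (q r) - H j r" using Hr by simp
qed

lemma GH_small:
  assumes "r < j" shows "G j r = 0" "H j r = 0"
proof -
  have e: "{M\<in>dist_partitions r. j \<in># M} = {}"
    using assms mem_le_sum_mset by (fastforce simp: dist_partitions_def partitions_def)
  show "G j r = 0" unfolding G_def e by simp
  show "H j r = 0" unfolding H_def e by simp
qed

lemma shift_sum:
  fixes f :: "nat \<Rightarrow> int"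
  shows "(\<Sum>m\<in>{1..Suc K}. f m) = f 1 + (\<Sum>m\<in>{1..K}. f (Suc m))"
  by (induction K) (simp_all add: algebra_simps)

lemma GH_formula:
  assumes "0 < j"
  shows "H j n = (\<Sum>m\<in>{1..n div j}. (-1)^(m-1) * int (q (n - j*m)))
       \<and> G j n = (\<Sum>m\<in>{1..n div j}. (-1)^(m-1) * (NQ (n - j*m) + int m * int (q (n - j*m))))"
proof (induction n rule: less_induct)
  case (less n)
  show ?case
  proof (cases "n < j")
    case True
    then show ?thesis using GH_small[OF True] by simp
  next
    case False
    define r where "r = n - j"
    have n: "n = r + j" using False r_def by simp
    have rl: "r < n" using assms n by simp
    have IH: "H j r = (\<Sum>m\<in>{1..r div j}. (-1)^(m-1) * int (q (r - j*m)))"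
             "G j r = (\<Sum>m\<in>{1..r div j}. (-1)^(m-1) * (NQ (r - j*m) + int m * int (q (r - j*m))))"
      using less.IH[OF rl] by auto
    have nd: "n div j = Suc (r div j)" unfolding n using assms by (simp add: div_add_self2)
    have e: "\<And>m. n - j * Suc m = r - j*m" using n by simp
    have sH: "(\<Sum>m\<in>{1..n div j}. (-1)^(m-1) * int (q (n - j*m))) = int (q r) - H j r"
      unfolding nd shift_sum IH
    proof -
      have "(\<Sum>m\<in>{1..r div j}. (-1)^(Suc m-1) * int (q (n - j*Suc m))) = - (\<Sum>m\<in>{1..r div j}. (-1)^(m-1) * int (q (r - j*m)))"
        unfolding sum_negf[symmetric]
      proof (rule sum.cong[OF refl])
        fix m assume "m \<in> {1..r div j}"
        then obtain m' where "m = Suc m'" by (cases m) auto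
        then show "(-1)^(Suc m-1) * int (q (n - j*Suc m)) = - ((-1)^(m-1) * int (q (r - j*m)))"
          using n by simp
      qed
      then show "(-1) ^ (1 - 1) * int (q (n - j * 1)) + (\<Sum>m = 1..r div j. (-1) ^ (Suc m - 1) * int (q (n - j * Suc m))) =
           int (q r) - (\<Sum>m = 1..r div j. (-1) ^ (m - 1) * int (q (r - j * m)))"
        using n by simp
    qed
    have sG: "(\<Sum>m\<in>{1..n div j}. (-1)^(m-1) * (NQ (n - j*m) + int m * int (q (n - j*m)))) = NQ r + int (q r) - G j r - H j r"
      unfolding nd shift_sum IH
    proof -
      have "(\<Sum>m\<in>{1..r div j}. (-1)^(Suc m-1) * (NQ (n - j*Suc m) + int (Suc m) * int (q (n - j*Suc m))))
          = - (\<Sum>m\<in>{1..r div j}. (-1)^(m-1) * (NQ (r - j*m) + int m * int (q (r - j*m))))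
            - (\<Sum>m\<in>{1..r div j}. (-1)^(m-1) * int (q (r - j*m)))"
        unfolding sum_negf[symmetric] sum_subtractf[symmetric]
      proof (rule sum.cong[OF refl])
        fix m assume "m \<in> {1..r div j}"
        then obtain m' where "m = Suc m'" by (cases m) auto
        then show "(-1)^(Suc m-1) * (NQ (n - j*Suc m) + int (Suc m) * int (q (n - j*Suc m)))
           = - ((-1)^(m-1) * (NQ (r - j*m) + int m * int (q (r - j*m)))) - (-1)^(m-1) * int (q (r - j*m))"
          using n by (simp add: algebra_simps)
      qed
      then show "(-1) ^ (1 - 1) * (NQ (n - j * 1) + int 1 * int (q (n - j * 1))) +
    (\<Sum>m = 1..r div j. (-1) ^ (Suc m - 1) * (NQ (n - j * Suc m) + int (Suc m) * int (q (n - j * Suc m)))) =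
    NQ r + int (q r) - (\<Sum>m = 1..r div j. (-1) ^ (m - 1) * (NQ (r - j * m) + int m * int (q (r - j * m)))) -
    (\<Sum>m = 1..r div j. (-1) ^ (m - 1) * int (q (r - j * m)))"
        using n by simp
    qed
    show ?thesis using GH_rec[OF assms, of r] sH sG n by simp
  qed
qed

lemma main_B:
  "int n * NQ n = (\<Sum>k\<in>{1..n}. sigma_s k * NQ (n-k) + int k * tau_s k * int (q (n-k)))"
proof -
  have fin: "finite (dist_partitions n)" by (rule dist_fin)
  have "int n * NQ n = (\<Sum>M\<in>dist_partitions n. int (size M) * int (sum_mset M))"
    unfolding NQ_def sum_distrib_left by (intro sum.cong refl) (simp add: dist_partitions_def partitions_def)
  also have "\<dots> = (\<Sum>M\<in>dist_partitions n. \<Sum>j\<in>{1..n}. int j * (if j \<in># M then int (size M) else 0))"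
  proof (rule sum.cong[OF refl])
    fix M assume M: "M \<in> dist_partitions n"
    then have MP: "M \<in> PS {0<..} n" by (simp add: dist_partitions_def partitions_PS)
    have c1: "\<And>x. count M x \<le> 1" using M by (simp add: dist_partitions_def)
    have "int (size M) * int (sum_mset M) = int (size M) * (\<Sum>j\<in>{1..n}. int j * int (count M j))"
      using sum_mset_count[OF _ PS_subset[OF _ MP]] by simp
    also have "\<dots> = (\<Sum>j\<in>{1..n}. int j * (if j \<in># M then int (size M) else 0))"
      unfolding sum_distrib_left
    proof (rule sum.cong[OF refl])
      fix j
      have "count M j = (if j \<in># M then 1 else 0)" using c1[of j]
        by (simp add: count_eq_zero_iff le_antisym Suc_leI)
      then show "int (size M) * (int j * int (count M j)) = int j * (if j \<in># M then int (size M) else 0)"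
        by simp
    qed
    finally show "int (size M) * int (sum_mset M) = (\<Sum>j\<in>{1..n}. int j * (if j \<in># M then int (size M) else 0))" .
  qed
  also have "\<dots> = (\<Sum>j\<in>{1..n}. int j * G j n)"
    unfolding G_def
    by (subst sum.swap) (simp add: sum_distrib_left[symmetric] sum.inter_filter fin)
  also have "\<dots> = (\<Sum>j\<in>{1..n}. \<Sum>m\<in>{1..n div j}. int j * ((-1)^(m-1) * (NQ (n - j*m) + int m * int (q (n - j*m)))))"
  proof (rule sum.cong[OF refl])
    fix j assume "j \<in> {1..n}"
    then have "0 < j" by simp
    then show "int j * G j n = (\<Sum>m\<in>{1..n div j}. int j * ((-1)^(m-1) * (NQ (n - j*m) + int m * int (q (n - j*m)))))"
      using GH_formula[of j n] by (simp add: sum_distrib_left)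
  qed
  also have "\<dots> = (\<Sum>k\<in>{1..n}. \<Sum>j\<in>divisors k. int j * ((-1)^(k div j-1) * (NQ (n - j*(k div j)) + int (k div j) * int (q (n - j*(k div j))))))"
    by (rule group_sum)
  also have "\<dots> = (\<Sum>k\<in>{1..n}. sigma_s k * NQ (n-k) + int k * tau_s k * int (q (n-k)))"
  proof (rule sum.cong[OF refl])
    fix k assume k: "k \<in> {1..n}"
    have "(\<Sum>j\<in>divisors k. int j * ((-1)^(k div j-1) * (NQ (n - j*(k div j)) + int (k div j) * int (q (n - j*(k div j))))))
       = (\<Sum>j\<in>divisors k. (-1)^(k div j-1) * int j * NQ (n-k) + int k * (-1)^(k div j-1) * int (q (n-k)))"
    proof (rule sum.cong[OF refl])
      fix j assume "j \<in> divisors k"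
      then have e: "j * (k div j) = k" by (auto simp: divisors_def)
      then have "int j * int (k div j) = int k" by (simp only: of_nat_mult[symmetric])
      then show "int j * ((-1)^(k div j-1) * (NQ (n - j*(k div j)) + int (k div j) * int (q (n - j*(k div j)))))
           = (-1)^(k div j-1) * int j * NQ (n-k) + int k * (-1)^(k div j-1) * int (q (n-k))"
        using e by (simp add: algebra_simps)
    qed
    also have "\<dots> = sigma_s k * NQ (n-k) + int k * tau_s k * int (q (n-k))"
      by (simp add: sigma_s_def tau_s_def sum.distrib sum_distrib_left sum_distrib_right mult.assoc)
    finally show "(\<Sum>j\<in>divisors k. int j * ((-1)^(k div j-1) * (NQ (n - j*(k div j)) + int (k div j) * int (q (n - j*(k div j))))))
       = sigma_s k * NQ (n-k) + int k * tau_s k * int (q (n-k))" .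
  qed
  finally show ?thesis .
qed

lemma reindex_final:
  fixes N s t c :: "nat \<Rightarrow> int"
  assumes "N 0 = 0" "0 < n"
  shows "(\<Sum>k\<in>{1..n}. s k * N (n-k) + int k * t k * c (n-k)) =
         (\<Sum>k=1..n-1. N k * s (n-k)) + (\<Sum>k=1..n. int k * t k * c (n-k))"
proof -
  have "(\<Sum>k\<in>{1..n}. s k * N (n-k)) = (\<Sum>k\<in>{1..n-1}. s k * N (n-k)) + s n * N 0"
    using assms(2) by (cases n) (auto simp: sum.cl_ivl_Suc)
  also have "(\<Sum>k\<in>{1..n-1}. s k * N (n-k)) = (\<Sum>k\<in>{1..n-1}. s (n-1+1-k) * N (n-(n-1+1-k)))"
    by (rule sum.atLeastAtMost_rev)
  also have "\<dots> = (\<Sum>k=1..n-1. N k * s (n-k))"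
    by (rule sum.cong[OF refl]) (use assms(2) in auto)
  finally show ?thesis using assms(1) by (simp add: sum.distrib)
qed

definition S2 :: "nat set" where "S2 = {x. \<exists>k. x = 2^k}"

lemma S2_div:
  assumes "0 < k" shows "{d\<in>S2. d dvd k} = (\<lambda>i. 2^i) ` {0..v2 k}"
proof -
  have H: "\<And>i. (2::nat)^i dvd k \<longleftrightarrow> i \<le> v2 k"
    unfolding v2_def using assms by (intro power_dvd_iff_le_multiplicity) auto
  show ?thesis
  proof (intro set_eqI iffI)
    fix x :: nat assume "x \<in> {d\<in>S2. d dvd k}"
    then obtain i where i: "x = 2^i" "2^i dvd k" by (auto simp: S2_def)
    then have "i \<in> {0..v2 k}" using H[of i] by simp
    then show "x \<in> (\<lambda>i. 2^i) ` {0..v2 k}" using i(1) by (rule rev_image_eqI)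
  next
    fix x :: nat assume "x \<in> (\<lambda>i. 2^i) ` {0..v2 k}"
    then obtain i where i: "i \<le> v2 k" "x = 2^i" by auto
    then show "x \<in> {d\<in>S2. d dvd k}" using H[of i] by (auto simp: S2_def)
  qed
qed

lemma NS0:
  assumes "0 \<notin> S" shows "NS S 0 = 0"
proof -
  have "PS S 0 \<subseteq> {{#}}"
  proof
    fix M assume "M \<in> PS S 0"
    then have "\<forall>x\<in>#M. x = 0" "set_mset M \<subseteq> S" by (auto simp: PS_def sum_mset_0_iff)
    then show "M \<in> {{#}}" using assms by (cases M) auto
  qed
  then have "PS S 0 = {} \<or> PS S 0 = {{#}}" by blast
  then show ?thesis by (auto simp: NS_def)
qed

lemma bin_PS: "bin_partitions r = PS S2 r"
proof (intro set_eqI iffI)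
  fix M assume "M \<in> bin_partitions r"
  then have "\<forall>x\<in>#M. \<exists>k. x = 2^k" "sum_mset M = r" by (auto simp: bin_partitions_def partitions_def)
  then show "M \<in> PS S2 r" unfolding PS_def S2_def by blast
next
  fix M assume "M \<in> PS S2 r"
  then have a: "\<forall>x\<in>#M. \<exists>k. x = 2^k" "sum_mset M = r" by (auto simp: PS_def S2_def)
  then have "\<forall>x\<in>#M. 0 < x" by auto
  then show "M \<in> bin_partitions r" using a by (simp add: bin_partitions_def partitions_def)
qed

lemma geom2: "(\<Sum>i\<in>{0..v}. int (2^i)) = 2^(v+1) - 1"
  by (induction v) auto

lemma S2_sum_card:
  assumes "0 < k"
  shows "(\<Sum>j\<in>{d\<in>S2. d dvd k}. int j) = 2^(v2 k + 1) - 1" "card {d\<in>S2. d dvd k} = v2 k + 1"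
proof -
  have inj: "inj_on (\<lambda>i. (2::nat)^i) {0..v2 k}" by (rule inj_onI) simp
  show "(\<Sum>j\<in>{d\<in>S2. d dvd k}. int j) = 2^(v2 k + 1) - 1"
    unfolding S2_div[OF assms] sum.reindex[OF inj] using geom2 by (simp add: comp_def)
  show "card {d\<in>S2. d dvd k} = v2 k + 1"
    unfolding S2_div[OF assms] card_image[OF inj] by simp
qed

lemma S1_div: "0 < k \<Longrightarrow> {d\<in>{0<..}. d dvd k} = divisors k"
  by (auto simp: divisors_def dvd_imp_le)

theorem corollary9:
  fixes n :: nat
  assumes "0 < n"
  shows "(int n * int (Np n) =
           (\<Sum>k=1..n-1. int (Np k) * sigma (n - k)) + (\<Sum>t=1..n. int t * tau t * int (p (n - t)))) \<and>
         (int n * int (Nq n) =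
           (\<Sum>k=1..n-1. int (Nq k) * sigma_s (n - k)) + (\<Sum>t=1..n. int t * tau_s t * int (q (n - t)))) \<and>
         (int n * int (Np_bin n) =
           (\<Sum>k=1..n-1. int (Np_bin k) * (2 ^ (v2 (n - k) + 1) - 1))
           + (\<Sum>t=1..n. int t * int (v2 t + 1) * int (b (n - t))))"
proof (intro conjI)
  have S10: "(0::nat) \<notin> {0<..}" by simp
  have N0: "NS {0<..} 0 = 0" by (rule NS0) simp
  have "int n * int (Np n) = int n * NS {0<..} n" by (simp add: Np_def NS_def partitions_PS)
  also have "\<dots> = (\<Sum>k\<in>{1..n}. sigma k * NS {0<..} (n-k) + int k * tau k * cS {0<..} (n-k))"
    unfolding main_A[OF S10, of n]
  proof (rule sum.cong[OF refl])
    fix k assume "k \<in> {1..n}"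
    then have e: "{d\<in>{0<..}. d dvd k} = divisors k" by (intro S1_div) simp
    show "(\<Sum>j\<in>{d\<in>{0<..}. d dvd k}. int j) * NS {0<..} (n-k) + int k * int (card {d\<in>{0<..}. d dvd k}) * cS {0<..} (n-k)
        = sigma k * NS {0<..} (n-k) + int k * tau k * cS {0<..} (n-k)"
      unfolding e sigma_def tau_def by (rule refl)
  qed
  also have "\<dots> = (\<Sum>k=1..n-1. NS {0<..} k * sigma (n-k)) + (\<Sum>k=1..n. int k * tau k * cS {0<..} (n-k))"
    by (rule reindex_final[where N = "NS {0<..}", OF N0 assms])
  finally show "int n * int (Np n) =
           (\<Sum>k=1..n-1. int (Np k) * sigma (n - k)) + (\<Sum>t=1..n. int t * tau t * int (p (n - t)))"
    by (simp add: Np_def NS_def cS_def p_def partitions_PS)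
next
  have "dist_partitions 0 \<subseteq> {{#}}"
  proof
    fix M assume "M \<in> dist_partitions 0"
    then have "\<forall>x\<in>#M. 0 < x" "\<forall>x\<in>#M. x = 0" by (auto simp: dist_partitions_def partitions_def)
    then show "M \<in> {{#}}" by (cases M) auto
  qed
  then have "dist_partitions 0 = {} \<or> dist_partitions 0 = {{#}}" by blast
  then have N0: "NQ 0 = 0" by (auto simp: NQ_def)
  have "int n * int (Nq n) = int n * NQ n" by (simp add: NQ_eq)
  also have "\<dots> = (\<Sum>k=1..n-1. NQ k * sigma_s (n-k)) + (\<Sum>k=1..n. int k * tau_s k * int (q (n-k)))"
    unfolding main_B by (rule reindex_final[where N = NQ, OF N0 assms])
  finally show "int n * int (Nq n) =
           (\<Sum>k=1..n-1. int (Nq k) * sigma_s (n - k)) + (\<Sum>t=1..n. int t * tau_s t * int (q (n - t)))"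
    by (simp add: NQ_eq)
next
  have S20: "0 \<notin> S2" by (simp add: S2_def)
  have N0: "NS S2 0 = 0" by (rule NS0) (rule S20)
  have "int n * int (Np_bin n) = int n * NS S2 n" by (simp add: Np_bin_def NS_def bin_PS)
  also have "\<dots> = (\<Sum>k\<in>{1..n}. (2 ^ (v2 k + 1) - 1) * NS S2 (n-k) + int k * int (v2 k + 1) * cS S2 (n-k))"
    unfolding main_A[OF S20, of n]
  proof (rule sum.cong[OF refl])
    fix k assume "k \<in> {1..n}"
    then have k: "0 < k" by simp
    show "(\<Sum>j\<in>{d\<in>S2. d dvd k}. int j) * NS S2 (n-k) + int k * int (card {d\<in>S2. d dvd k}) * cS S2 (n-k)
        = (2 ^ (v2 k + 1) - 1) * NS S2 (n-k) + int k * int (v2 k + 1) * cS S2 (n-k)"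
      unfolding S2_sum_card[OF k] by (rule refl)
  qed
  also have "\<dots> = (\<Sum>k=1..n-1. NS S2 k * (2 ^ (v2 (n-k) + 1) - 1)) + (\<Sum>k=1..n. int k * int (v2 k + 1) * cS S2 (n-k))"
    by (rule reindex_final[where N = "NS S2", OF N0 assms])
  finally show "int n * int (Np_bin n) =
           (\<Sum>k=1..n-1. int (Np_bin k) * (2 ^ (v2 (n - k) + 1) - 1))
           + (\<Sum>t=1..n. int t * int (v2 t + 1) * int (b (n - t)))"
    by (simp add: Np_bin_def NS_def cS_def b_def bin_PS)
qed

end
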